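(* Let $(X_1,\le_1)$, $(X_2,\le_2)$ be partially ordered sets and $T:X_1\to X_2$ a map. The following are equivalent: (a) $T$ has the Mcp; (b) $T$ is monotone and for every $A\subset X_1$ and $u\in X_2$ such that $T(a)\le_2 u$ for all $a\in A$, we have $T(a)\le_2u$ for all $a\in\widehat A$; (c) $T$ is monotone and $T(\overline A)\subset\overline{T(A)}$ for every $A\subset X_1$; (d) $T(\widehat A)\subset\widehat{T(A)}$ for every $A\subset X_1$; (e) for every $A\subset X_1$ having a tip, the set $T(A)$ has a tip and $T({\sf tip}\,A)={\sf tip}\,T(A)$.
   Context: Let $(X,\le)$ be a partially ordered set. A subset $D\subset X$ is directed if every finite subset of $D$ (including the empty one) has an upper bound in $D$; in particular directed sets are nonempty. $A\subset X$ is a lower set if $x\in A$ and $y\le x$ imply $y\in A$. A subset $A\subset X$ is directed-sup-closed if the supremum of every directed $D\subset A$ which has a supremum in $X$ belongs to $A$. For $A\subset X$, $\overline A$ is the smallest directed-sup-closed subset of $X$ containing $A$, and $\widehat A$ is the smallest subset of $X$ containing $A$ which is both a lower set and directed-sup-closed (closures in $X_1$ resp. $X_2$ as appropriate). $A$ has a tip if $\overline A$ has a maximum; this maximum is denoted ${\sf tip}\,A$. A map $T:X_1\to X_2$ between partially ordered sets has the Monotone Convergence Property (Mcp) if for every directed $D\subset X_1$ having a supremum, $T(D)$ has a supremum and $T(\sup D)=\sup T(D)$. *)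

theory Defs
  imports Main
begin

definition dir_set :: "'a::order set \<Rightarrow> bool" where
  "dir_set D \<longleftrightarrow> (\<forall>F. finite F \<and> F \<subseteq> D \<longrightarrow> (\<exists>u\<in>D. \<forall>x\<in>F. x \<le> u))"

definition is_sup_of :: "'a::order set \<Rightarrow> 'a \<Rightarrow> bool" where
  "is_sup_of D s \<longleftrightarrow> (\<forall>x\<in>D. x \<le> s) \<and> (\<forall>u. (\<forall>x\<in>D. x \<le> u) \<longrightarrow> s \<le> u)"

definition lower_set :: "'a::order set \<Rightarrow> bool" where
  "lower_set A \<longleftrightarrow> (\<forall>x\<in>A. \<forall>y. y \<le> x \<longrightarrow> y \<in> A)"

definition dsup_closed :: "'a::order set \<Rightarrow> bool" where
  "dsup_closed A \<longleftrightarrow> (\<forall>D s. dir_set D \<and> D \<subseteq> A \<and> is_sup_of D s \<longrightarrow> s \<in> A)"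

text \<open>Smallest directed-sup-closed superset (overline A).\<close>
definition dclos :: "'a::order set \<Rightarrow> 'a set" where
  "dclos A = \<Inter>{C. A \<subseteq> C \<and> dsup_closed C}"

text \<open>Smallest directed-sup-closed lower superset (widehat A).\<close>
definition lclos :: "'a::order set \<Rightarrow> 'a set" where
  "lclos A = \<Inter>{C. A \<subseteq> C \<and> lower_set C \<and> dsup_closed C}"

definition has_tip :: "'a::order set \<Rightarrow> bool" where
  "has_tip A \<longleftrightarrow> (\<exists>m\<in>dclos A. \<forall>x\<in>dclos A. x \<le> m)"

definition tip :: "'a::order set \<Rightarrow> 'a" where
  "tip A = (THE m. m \<in> dclos A \<and> (\<forall>x\<in>dclos A. x \<le> m))"

definition has_mcp :: "('a::order \<Rightarrow> 'b::order) \<Rightarrow> bool" where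
  "has_mcp T \<longleftrightarrow> (\<forall>D s. dir_set D \<and> is_sup_of D s \<longrightarrow> is_sup_of (T ` D) (T s))"

end

theory Submission
  imports Defs
begin

lemma dclos_sub: "A \<subseteq> dclos A"
  unfolding dclos_def by blast
lemma dclos_closed: "dsup_closed (dclos A)"
  unfolding dclos_def dsup_closed_def by blast
lemma dclos_least: "A \<subseteq> C \<Longrightarrow> dsup_closed C \<Longrightarrow> dclos A \<subseteq> C"
  unfolding dclos_def by blast
lemma lclos_sub: "A \<subseteq> lclos A"
  unfolding lclos_def by blast
lemma lclos_closed: "dsup_closed (lclos A)"
  unfolding lclos_def dsup_closed_def by blast
lemma lclos_lower: "lower_set (lclos A)"
  unfolding lclos_def lower_set_def by blast
lemma lclos_least: "A \<subseteq> C \<Longrightarrow> lower_set C \<Longrightarrow> dsup_closed C \<Longrightarrow> lclos A \<subseteq> C"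
  unfolding lclos_def by blast

lemma down_closed: "dsup_closed {x. x \<le> (u::'a::order)}"
  unfolding dsup_closed_def is_sup_of_def by blast
lemma down_lower: "lower_set {x. x \<le> (u::'a::order)}"
  unfolding lower_set_def using order_trans by blast

lemma sup_in_dclos: "dir_set D \<Longrightarrow> is_sup_of D s \<Longrightarrow> s \<in> dclos D"
  using dclos_closed[of D] dclos_sub[of D] unfolding dsup_closed_def by blast
lemma sup_in_lclos: "dir_set D \<Longrightarrow> is_sup_of D s \<Longrightarrow> s \<in> lclos D"
  using lclos_closed[of D] lclos_sub[of D] unfolding dsup_closed_def by blast

lemma dir_pair: "(x::'a::order) \<le> y \<Longrightarrow> dir_set {x,y}"
  unfolding dir_set_def by auto
lemma sup_pair: "(x::'a::order) \<le> y \<Longrightarrow> is_sup_of {x,y} y"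
  unfolding is_sup_of_def by auto

lemma dir_image:
  assumes "mono (T::'a::order \<Rightarrow> 'b::order)" "dir_set D"
  shows "dir_set (T ` D)"
  unfolding dir_set_def
proof (intro allI impI)
  fix F assume "finite F \<and> F \<subseteq> T ` D"
  then obtain G where G: "G \<subseteq> D" "finite G" "F = T ` G"
    by (meson finite_subset_image)
  then obtain u where "u \<in> D" "\<forall>x\<in>G. x \<le> u" using assms(2) unfolding dir_set_def by blast
  then show "\<exists>u\<in>T ` D. \<forall>x\<in>F. x \<le> u" using G assms(1) by (auto dest: monoD)
qed

lemma tip_eq: "m \<in> dclos A \<Longrightarrow> \<forall>x\<in>dclos A. x \<le> m \<Longrightarrow> tip A = m"
  unfolding tip_def by (rule the_equality) (auto intro: order.antisym)

lemma tip_max: assumes "has_tip A" shows "tip A \<in> dclos A \<and> (\<forall>x\<in>dclos A. x \<le> tip A)"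
proof -
  obtain m where m: "m \<in> dclos A" "\<forall>x\<in>dclos A. x \<le> m" using assms unfolding has_tip_def by blast
  then have "tip A = m" by (rule tip_eq)
  then show ?thesis using m by simp
qed

lemma has_tip_max:
  assumes "m \<in> A" "\<forall>x\<in>A. x \<le> (m::'a::order)"
  shows "has_tip A \<and> tip A = m"
proof -
  have "dclos A \<subseteq> {x. x \<le> m}" using assms by (intro dclos_least down_closed) auto
  moreover have "m \<in> dclos A" using assms dclos_sub by blast
  ultimately show ?thesis unfolding has_tip_def using tip_eq by blast
qed

lemma mcp_mono: assumes m: "has_mcp (T::'a::order \<Rightarrow> 'b::order)" shows "mono T"
proof (rule monoI)
  fix x y :: 'a assume xy: "x \<le> y"
  have "is_sup_of (T ` {x,y}) (T y)" using m dir_pair[OF xy] sup_pair[OF xy] unfolding has_mcp_def by blast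
  then show "T x \<le> T y" unfolding is_sup_of_def by blast
qed

lemma a_b: "has_mcp (T::'a::order \<Rightarrow> 'b::order) \<Longrightarrow> (\<forall>a\<in>A. T a \<le> u) \<Longrightarrow> a \<in> lclos A \<Longrightarrow> T a \<le> u"
proof -
  assume m: "has_mcp T" and A: "\<forall>a\<in>A. T a \<le> u" and a: "a \<in> lclos A"
  have mono: "mono T" using m mcp_mono by blast
  have "lclos A \<subseteq> {x. T x \<le> u}"
  proof (rule lclos_least)
    show "A \<subseteq> {x. T x \<le> u}" using A by auto
    show "lower_set {x. T x \<le> u}" unfolding lower_set_def using mono
      by (auto dest: monoD intro: order_trans)
    show "dsup_closed {x. T x \<le> u}" unfolding dsup_closed_def
    proof (intro allI impI)
      fix D :: "'a set" and s :: 'a assume h: "dir_set D \<and> D \<subseteq> {x. T x \<le> u} \<and> is_sup_of D s"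
      then have "is_sup_of (T ` D) (T s)" using m unfolding has_mcp_def by blast
      then show "s \<in> {x. T x \<le> u}" using h unfolding is_sup_of_def by auto
    qed
  qed
  then show ?thesis using a by auto
qed

lemma b_a:
  assumes mono: "mono (T::'a::order \<Rightarrow> 'b::order)"
    and b: "\<forall>A u. (\<forall>a\<in>A. T a \<le> u) \<longrightarrow> (\<forall>a\<in>lclos A. T a \<le> u)"
  shows "has_mcp T"
  unfolding has_mcp_def
proof (intro allI impI)
  fix D :: "'a set" and s :: 'a assume h: "dir_set D \<and> is_sup_of D s"
  have "s \<in> lclos D" using h sup_in_lclos by blast
  then show "is_sup_of (T ` D) (T s)" using h b mono unfolding is_sup_of_def
    by (auto dest: monoD)
qed

lemma a_c: "has_mcp (T::'a::order \<Rightarrow> 'b::order) \<Longrightarrow> T ` dclos A \<subseteq> dclos (T ` A)"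
proof -
  assume m: "has_mcp T"
  have mono: "mono T" using m mcp_mono by blast
  have "dclos A \<subseteq> {x. T x \<in> dclos (T ` A)}"
  proof (rule dclos_least)
    show "A \<subseteq> {x. T x \<in> dclos (T ` A)}" using dclos_sub[of "T ` A"] by blast
    show "dsup_closed {x. T x \<in> dclos (T ` A)}" unfolding dsup_closed_def
    proof (intro allI impI)
      fix D :: "'a set" and s :: 'a assume h: "dir_set D \<and> D \<subseteq> {x. T x \<in> dclos (T ` A)} \<and> is_sup_of D s"
      then have "is_sup_of (T ` D) (T s)" using m unfolding has_mcp_def by blast
      moreover have "dir_set (T ` D)" using h mono dir_image by blast
      moreover have "T ` D \<subseteq> dclos (T ` A)" using h by auto
      ultimately show "s \<in> {x. T x \<in> dclos (T ` A)}"
        using dclos_closed[of "T ` A"] unfolding dsup_closed_def by blast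
    qed
  qed
  then show ?thesis by auto
qed

lemma c_a:
  assumes mono: "mono (T::'a::order \<Rightarrow> 'b::order)"
    and c: "\<forall>A. T ` dclos A \<subseteq> dclos (T ` A)"
  shows "has_mcp T"
  unfolding has_mcp_def
proof (intro allI impI)
  fix D :: "'a set" and s :: 'a assume h: "dir_set D \<and> is_sup_of D s"
  have "T s \<in> dclos (T ` D)" using h sup_in_dclos c by blast
  moreover have "\<And>u. \<forall>x\<in>T ` D. x \<le> u \<Longrightarrow> dclos (T ` D) \<subseteq> {x. x \<le> u}"
    by (rule dclos_least) (auto intro: down_closed)
  ultimately show "is_sup_of (T ` D) (T s)" using h mono unfolding is_sup_of_def
    by (auto dest: monoD)
qed

lemma a_d: "has_mcp (T::'a::order \<Rightarrow> 'b::order) \<Longrightarrow> T ` lclos A \<subseteq> lclos (T ` A)"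
proof -
  assume m: "has_mcp T"
  have mono: "mono T" using m mcp_mono by blast
  have "lclos A \<subseteq> {x. T x \<in> lclos (T ` A)}"
  proof (rule lclos_least)
    show "A \<subseteq> {x. T x \<in> lclos (T ` A)}" using lclos_sub[of "T ` A"] by blast
    show "lower_set {x. T x \<in> lclos (T ` A)}"
      using lclos_lower[of "T ` A"] mono unfolding lower_set_def by (auto dest: monoD)
    show "dsup_closed {x. T x \<in> lclos (T ` A)}" unfolding dsup_closed_def
    proof (intro allI impI)
      fix D :: "'a set" and s :: 'a assume h: "dir_set D \<and> D \<subseteq> {x. T x \<in> lclos (T ` A)} \<and> is_sup_of D s"
      then have "is_sup_of (T ` D) (T s)" using m unfolding has_mcp_def by blast
      moreover have "dir_set (T ` D)" using h mono dir_image by blast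
      moreover have "T ` D \<subseteq> lclos (T ` A)" using h by auto
      ultimately show "s \<in> {x. T x \<in> lclos (T ` A)}"
        using lclos_closed[of "T ` A"] unfolding dsup_closed_def by blast
    qed
  qed
  then show ?thesis by auto
qed

lemma d_a:
  assumes d: "\<forall>A. T ` lclos A \<subseteq> lclos (T ` A)"
  shows "has_mcp (T::'a::order \<Rightarrow> 'b::order)"
proof -
  have down: "\<And>B u. \<forall>x\<in>B. x \<le> u \<Longrightarrow> lclos B \<subseteq> {x. x \<le> (u::'b)}"
    by (rule lclos_least) (auto intro: down_closed down_lower)
  have mono: "mono T"
  proof (rule monoI)
    fix x y :: 'a assume "x \<le> y"
    then have "x \<in> lclos {y}" using lclos_lower[of "{y}"] lclos_sub[of "{y}"]
      unfolding lower_set_def by blast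
    then have "T x \<in> lclos {T y}" using d by force
    then show "T x \<le> T y" using down[of "{T y}" "T y"] by auto
  qed
  show ?thesis unfolding has_mcp_def
  proof (intro allI impI)
    fix D :: "'a set" and s :: 'a assume h: "dir_set D \<and> is_sup_of D s"
    have "T s \<in> lclos (T ` D)" using h sup_in_lclos d by blast
    then show "is_sup_of (T ` D) (T s)" using h mono down[of "T ` D"]
      unfolding is_sup_of_def by (auto dest: monoD)
  qed
qed

lemma a_e:
  assumes m: "has_mcp (T::'a::order \<Rightarrow> 'b::order)" and t: "has_tip A"
  shows "has_tip (T ` A) \<and> T (tip A) = tip (T ` A)"
proof -
  have mono: "mono T" using m mcp_mono by blast
  let ?m = "tip A"
  have tm: "?m \<in> dclos A" "\<forall>x\<in>dclos A. x \<le> ?m" using tip_max t by auto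
  have "T ?m \<in> dclos (T ` A)" using tm a_c[OF m] by blast
  moreover have "dclos (T ` A) \<subseteq> {x. x \<le> T ?m}"
    using tm dclos_sub[of A] mono
    by (intro dclos_least down_closed) (auto dest: monoD)
  ultimately have "\<forall>x\<in>dclos (T ` A). x \<le> T ?m" "T ?m \<in> dclos (T ` A)" by auto
  moreover then have "tip (T ` A) = T ?m" by (intro tip_eq) auto
  ultimately show ?thesis unfolding has_tip_def by auto
qed

lemma e_a:
  assumes e: "\<forall>A. has_tip A \<longrightarrow> has_tip (T ` A) \<and> T (tip A) = tip (T ` A)"
  shows "has_mcp (T::'a::order \<Rightarrow> 'b::order)"
proof -
  have mono: "mono T"
  proof (rule monoI)
    fix x y :: 'a assume "x \<le> y"
    then have "has_tip {x,y} \<and> tip {x,y} = y" using has_tip_max[of y "{x,y}"] by auto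
    then have "has_tip (T ` {x,y}) \<and> T y = tip (T ` {x,y})" using e by metis
    then show "T x \<le> T y" using tip_max[of "T ` {x,y}"] dclos_sub[of "T ` {x,y}"] by auto
  qed
  show ?thesis unfolding has_mcp_def
  proof (intro allI impI)
    fix D :: "'a set" and s :: 'a assume h: "dir_set D \<and> is_sup_of D s"
    have "s \<in> dclos D" using h sup_in_dclos by blast
    moreover have "dclos D \<subseteq> {x. x \<le> s}" using h
      by (intro dclos_least down_closed) (auto simp: is_sup_of_def)
    ultimately have "has_tip D \<and> tip D = s" unfolding has_tip_def using tip_eq by blast
    then have ht: "has_tip (T ` D)" "T s = tip (T ` D)" using e by metis+
    have ts: "T s \<in> dclos (T ` D)" using tip_max[OF ht(1)] ht(2) by simp
    have "\<And>u. \<forall>x\<in>T ` D. x \<le> u \<Longrightarrow> dclos (T ` D) \<subseteq> {x. x \<le> u}"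
      by (rule dclos_least) (auto intro: down_closed)
    then show "is_sup_of (T ` D) (T s)" using h mono ts unfolding is_sup_of_def
      by (auto dest: monoD)
  qed
qed

theorem mainTheorem2:
  fixes T :: "'a::order \<Rightarrow> 'b::order"
  defines "Pa \<equiv> has_mcp T"
    and "Pb \<equiv> mono T \<and> (\<forall>A u. (\<forall>a\<in>A. T a \<le> u) \<longrightarrow> (\<forall>a\<in>lclos A. T a \<le> u))"
    and "Pc \<equiv> mono T \<and> (\<forall>A. T ` dclos A \<subseteq> dclos (T ` A))"
    and "Pd \<equiv> (\<forall>A. T ` lclos A \<subseteq> lclos (T ` A))"
    and "Pe \<equiv> (\<forall>A. has_tip A \<longrightarrow> has_tip (T ` A) \<and> T (tip A) = tip (T ` A))"
  shows "(Pa \<longleftrightarrow> Pb) \<and> (Pa \<longleftrightarrow> Pc) \<and> (Pa \<longleftrightarrow> Pd) \<and> (Pa \<longleftrightarrow> Pe)"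
proof -
  have 1: "has_mcp T \<Longrightarrow> mono T" by (rule mcp_mono)
  have b: "has_mcp T = (mono T \<and> (\<forall>A u. (\<forall>a\<in>A. T a \<le> u) \<longrightarrow> (\<forall>a\<in>lclos A. T a \<le> u)))"
    using 1 a_b[of T] b_a[of T] by blast
  have c: "has_mcp T = (mono T \<and> (\<forall>A. T ` dclos A \<subseteq> dclos (T ` A)))"
    using 1 a_c[of T] c_a[of T] by blast
  have d: "has_mcp T = (\<forall>A. T ` lclos A \<subseteq> lclos (T ` A))"
    using a_d[of T] d_a[of T] by blast
  have e: "has_mcp T = (\<forall>A. has_tip A \<longrightarrow> has_tip (T ` A) \<and> T (tip A) = tip (T ` A))"
    using a_e[of T] e_a[of T] by blast
  show ?thesis unfolding Pa_def Pb_def Pc_def Pd_def Pe_def by (rule conjI[OF b conjI[OF c conjI[OF d e]]])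
qed

end
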